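(* Let $\gamma>0$. For every $x\in\mathbb R^n$ and every $T>0$, $$V_\gamma(x)=\sup_{\lambda\in\Lambda}\inf_{\mathrm u\in\mathbb U}\min\Bigl\{\min_{t\in[0,T]}\max\bigl[e^{-\gamma t}\ell(\xi(t)),\ \max_{s\in[0,t]}e^{-\gamma s}c(\xi(s))\bigr],\ \max\bigl[e^{-\gamma T}V_\gamma(\xi(T)),\ \max_{t\in[0,T]}e^{-\gamma t}c(\xi(t))\bigr]\Bigr\},$$ where $\xi=\xi_x^{\mathrm u,\lambda[\mathrm u]}$.
   Context: Consider the system $\dot x(t)=f(x(t),\mathrm u(t),\mathrm d(t))$ for $t\ge 0$, $x(0)=x$, where $U\subset\mathbb R^{m_u}$ and $D\subset\mathbb R^{m_d}$ are compact convex sets and $f:\mathbb R^n\times U\times D\to\mathbb R^n$ is uniformly continuous, bounded, and Lipschitz continuous in $x$ uniformly in $(u,d)$ (time-invariant). Let $\mathbb U$ (resp. $\mathbb D$) be the set of Lebesgue measurable maps $[0,\infty)\to U$ (resp. $[0,\infty)\to D$). Let $\Lambda$ be the set of non-anticipative strategies $\lambda:\mathbb U\to\mathbb D$, i.e. for every $t\ge0$, if $\mathrm u(s)=\mathrm u'(s)$ for a.e. $s\in[0,t]$ then $\lambda[\mathrm u](s)=\lambda[\mathrm u'](s)$ for a.e. $s\in[0,t]$. For $x\in\mathbb R^n$, $\mathrm u\in\mathbb U$, $\mathrm d\in\mathbb D$, $\xi_x^{\mathrm u,\mathrm d}(\cdot)$ denotes the unique solution of the system; inside $\sup_\lambda\inf_{\mathrm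 u}$ expressions, $\xi(\cdot)$ abbreviates $\xi_x^{\mathrm u,\lambda[\mathrm u]}(\cdot)$. Let $\ell,c:\mathbb R^n\to\mathbb R$ be bounded and Lipschitz continuous. For $\gamma>0$ define the discounted reach-avoid value function $$V_\gamma(x):=\sup_{\lambda\in\Lambda}\inf_{\mathrm u\in\mathbb U}\inf_{t\in[0,\infty)}\max\Bigl\{e^{-\gamma t}\ell(\xi(t)),\ \max_{s\in[0,t]}e^{-\gamma s}c(\xi(s))\Bigr\}.$$ *)

theory Defs
  imports "HOL-Analysis.Analysis"
begin

definition signals :: "'a::euclidean_space set \<Rightarrow> (real \<Rightarrow> 'a) set" where
  "signals A = {w. w \<in> borel_measurable (lebesgue_on {0..}) \<and> (\<forall>t\<ge>0. w t \<in> A)}"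

definition nonanticipative_strategies ::
  "'u::euclidean_space set \<Rightarrow> 'd::euclidean_space set \<Rightarrow> ((real \<Rightarrow> 'u) \<Rightarrow> (real \<Rightarrow> 'd)) set" where
  "nonanticipative_strategies U D =
     {lam. (\<forall>u\<in>signals U. lam u \<in> signals D) \<and>
           (\<forall>t\<ge>0. \<forall>u\<in>signals U. \<forall>u'\<in>signals U.
              (AE s in lebesgue_on {0..t}. u s = u' s) \<longrightarrow>
              (AE s in lebesgue_on {0..t}. lam u s = lam u' s))}"

text \<open>The (Caratheodory) solution of x' = f(x,u,d), x(0) = x on [0,inf),
  extended by the constant x for negative times (to make it unique).\<close>
definition traj ::
  "('n::euclidean_space \<Rightarrow> 'u \<Rightarrow> 'd \<Rightarrow> 'n) \<Rightarrow> 'n \<Rightarrow> (real \<Rightarrow> 'u) \<Rightarrow> (real \<Rightarrow> 'd) \<Rightarrow> real \<Rightarrow> 'n" where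
  "traj f x u d = (THE \<xi>. (\<forall>t<0. \<xi> t = x) \<and>
      (\<forall>t\<ge>0. ((\<lambda>s. f (\<xi> s) (u s) (d s)) has_integral (\<xi> t - x)) {0..t}))"

definition ra_payoff ::
  "real \<Rightarrow> ('n \<Rightarrow> real) \<Rightarrow> ('n \<Rightarrow> real) \<Rightarrow> (real \<Rightarrow> 'n) \<Rightarrow> real \<Rightarrow> real" where
  "ra_payoff \<gamma> l c \<xi> t =
     max (exp (- \<gamma> * t) * l (\<xi> t)) (SUP s\<in>{0..t}. exp (- \<gamma> * s) * c (\<xi> s))"

definition V_gamma ::
  "('n::euclidean_space \<Rightarrow> 'u::euclidean_space \<Rightarrow> 'd::euclidean_space \<Rightarrow> 'n) \<Rightarrow> 'u set \<Rightarrow> 'd set \<Rightarrow>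
   ('n \<Rightarrow> real) \<Rightarrow> ('n \<Rightarrow> real) \<Rightarrow> real \<Rightarrow> 'n \<Rightarrow> real" where
  "V_gamma f U D l c \<gamma> x =
     (SUP lam\<in>nonanticipative_strategies U D. INF u\<in>signals U. INF t\<in>{0..}.
        ra_payoff \<gamma> l c (traj f x u (lam u)) t)"

end

theory Submission
  imports Defs
begin

lemma lebesgue_transl_meas:
  fixes g :: "real \<Rightarrow> 'a::euclidean_space"
  assumes "g \<in> borel_measurable lebesgue"
  shows "(\<lambda>s. g (T + s)) \<in> borel_measurable lebesgue"
proof -
  have "(\<lambda>x::real. T + (\<Sum>j\<in>Basis. (1 * (x \<bullet> j)) *\<^sub>R j)) \<in> lebesgue \<rightarrow>\<^sub>M lebesgue"
    by (rule lebesgue_affine_measurable) auto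
  then have "(\<lambda>x::real. T + x) \<in> lebesgue \<rightarrow>\<^sub>M lebesgue" by simp
  from measurable_compose[OF this assms] show ?thesis by (simp add: o_def)
qed

lemma sig_meas_iff:
  fixes w :: "real \<Rightarrow> 'a::euclidean_space"
  shows "w \<in> borel_measurable (lebesgue_on {0..}) \<longleftrightarrow> (\<lambda>s. indicator {0..} s *\<^sub>R w s) \<in> borel_measurable lebesgue"
  by (rule borel_measurable_restrict_space_iff) auto

lemma signals_shift:
  assumes "w \<in> signals A" "T \<ge> 0"
  shows "(\<lambda>r. w (T + r)) \<in> signals A"
proof -
  have m: "(\<lambda>s. indicator {0..} s *\<^sub>R w s) \<in> borel_measurable lebesgue"
    using assms sig_meas_iff unfolding signals_def by blast
  have "(\<lambda>s. indicator {0..} s *\<^sub>R ((\<lambda>s. indicator {0..} s *\<^sub>R w s) (T + s))) \<in> borel_measurable lebesgue"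
    by (intro borel_measurable_scaleR borel_measurable_indicator lebesgue_transl_meas m) auto
  moreover have "(\<lambda>s. indicator {0..} s *\<^sub>R ((\<lambda>s. indicator {0..} s *\<^sub>R w s) (T + s))) = (\<lambda>s. indicator {0..} s *\<^sub>R w (T + s))"
    using assms(2) by (auto simp: indicator_def fun_eq_iff)
  ultimately show ?thesis using assms unfolding signals_def sig_meas_iff by auto
qed

definition cat :: "real \<Rightarrow> (real \<Rightarrow> 'a) \<Rightarrow> (real \<Rightarrow> 'a) \<Rightarrow> real \<Rightarrow> 'a" where
  "cat T u v = (\<lambda>s. if s \<le> T then u s else v (s - T))"

lemma signals_cat:
  assumes "u \<in> signals A" "v \<in> signals A" "T \<ge> 0"
  shows "cat T u v \<in> signals A"
proof -
  have mu: "(\<lambda>s. indicator {0..} s *\<^sub>R u s) \<in> borel_measurable lebesgue"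
    using assms sig_meas_iff unfolding signals_def by blast
  have mv: "(\<lambda>s. indicator {0..} s *\<^sub>R v s) \<in> borel_measurable lebesgue"
    using assms sig_meas_iff unfolding signals_def by blast
  have "(\<lambda>s. indicator {0..T} s *\<^sub>R (indicator {0..} s *\<^sub>R u s) + indicator {T<..} s *\<^sub>R ((\<lambda>s. indicator {0..} s *\<^sub>R v s) (-T + s))) \<in> borel_measurable lebesgue"
    by (intro borel_measurable_add borel_measurable_scaleR borel_measurable_indicator lebesgue_transl_meas mu mv) auto
  moreover have "(\<lambda>s. indicator {0..T} s *\<^sub>R (indicator {0..} s *\<^sub>R u s) + indicator {T<..} s *\<^sub>R ((\<lambda>s. indicator {0..} s *\<^sub>R v s) (-T + s))) = (\<lambda>s. indicator {0..} s *\<^sub>R cat T u v s)"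
    using assms(3) by (auto simp: indicator_def fun_eq_iff cat_def)
  ultimately show ?thesis using assms unfolding signals_def sig_meas_iff by (auto simp: cat_def)
qed

lemma ae_on_iff:
  assumes "S \<in> sets lebesgue"
  shows "(AE s in lebesgue_on S. P s) \<longleftrightarrow> (\<exists>N. negligible N \<and> (\<forall>s\<in>S - N. P s))"
proof -
  have "(AE s in lebesgue_on S. P s) \<longleftrightarrow> (AE s in lebesgue. s \<in> S \<longrightarrow> P s)"
    by (rule AE_restrict_space_iff) (use assms in auto)
  also have "\<dots> \<longleftrightarrow> (\<exists>N. negligible N \<and> (\<forall>s\<in>S - N. P s))"
    unfolding eventually_ae_filter negligible_iff_null_sets by auto
  finally show ?thesis .
qed

lemma has_integral_pow0:
  assumes "t \<ge> 0"
  shows "((\<lambda>s::real. s ^ n) has_integral t ^ Suc n / Suc n) {0..t}"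
proof -
  have "((\<lambda>s::real. s ^ n) has_integral ((\<lambda>s. s ^ Suc n / Suc n) t - (\<lambda>s. s ^ Suc n / Suc n) 0)) {0..t}"
  proof (rule fundamental_theorem_of_calculus[OF assms])
    fix x :: real
    show "((\<lambda>s. s ^ Suc n / Suc n) has_vector_derivative x ^ n) (at x within {0..t})"
      unfolding has_real_derivative_iff_has_vector_derivative[symmetric]
      by (rule derivative_eq_intros refl | simp)+
  qed
  then show ?thesis by simp
qed

lemma gronwall0:
  fixes w :: "real \<Rightarrow> real"
  assumes cont: "continuous_on {0..T} w" and nn: "\<And>t. t \<in> {0..T} \<Longrightarrow> 0 \<le> w t"
    and le: "\<And>t. t \<in> {0..T} \<Longrightarrow> w t \<le> L * integral {0..t} w" and L: "L \<ge> 0"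
    and t: "t \<in> {0..T}"
  shows "w t = 0"
proof -
  obtain B where B: "\<And>s. s \<in> {0..T} \<Longrightarrow> w s \<le> B"
    using compact_attains_sup[of "w ` {0..T}"] t cont
    by (metis compact_Icc compact_continuous_image empty_iff image_eqI image_is_empty)
  have ind: "\<forall>s\<in>{0..T}. w s \<le> B * (L * s) ^ n / fact n" for n
  proof (induction n)
    case 0
    then show ?case using B by simp
  next
    case (Suc n)
    show ?case
    proof
      fix s assume s: "s \<in> {0..T}"
      have sub: "{0..s} \<subseteq> {0..T}" using s by auto
      have intw: "w integrable_on {0..s}"
        by (rule integrable_continuous_interval) (rule continuous_on_subset[OF cont sub])
      have hp: "((\<lambda>r. B * L ^ n / fact n * r ^ n) has_integral B * L ^ n / fact n * (s ^ Suc n / Suc n)) {0..s}"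
        using has_integral_pow0[of s n] s by (intro has_integral_mult_right) auto
      have "integral {0..s} w \<le> integral {0..s} (\<lambda>r. B * L ^ n / fact n * r ^ n)"
      proof (rule integral_le[OF intw])
        show "(\<lambda>r. B * L ^ n / fact n * r ^ n) integrable_on {0..s}" using hp by blast
        fix r assume "r \<in> {0..s}"
        then have "r \<in> {0..T}" using sub by auto
        with Suc have "w r \<le> B * (L * r) ^ n / fact n" by blast
        then show "w r \<le> B * L ^ n / fact n * r ^ n"
          by (simp add: power_mult_distrib)
      qed
      also have "\<dots> = B * L ^ n / fact n * (s ^ Suc n / Suc n)"
        using hp by (rule integral_unique)
      finally have "L * integral {0..s} w \<le> L * (B * L ^ n / fact n * (s ^ Suc n / Suc n))"
        using L by (rule mult_left_mono)
      also have "\<dots> = B * (L * s) ^ Suc n / fact (Suc n)"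
        by (simp add: power_mult_distrib field_simps)
      finally show "w s \<le> B * (L * s) ^ Suc n / fact (Suc n)" using le[OF s] by linarith
    qed
  qed
  have "(\<lambda>n. (L * t) ^ n / fact n) \<longlonglongrightarrow> 0"
    using summable_LIMSEQ_zero[OF summable_exp[of "L * t"]] by (simp add: divide_inverse mult.commute)
  then have "(\<lambda>n. B * ((L * t) ^ n / fact n)) \<longlonglongrightarrow> B * 0"
    by (intro tendsto_mult tendsto_const)
  moreover have "\<forall>n. w t \<le> B * ((L * t) ^ n / fact n)" using ind t by simp
  ultimately have "w t \<le> 0"
    by (intro LIMSEQ_le_const[where X="\<lambda>n. B * ((L * t) ^ n / fact n)"]) auto
  with nn[OF t] show ?thesis by simp
qed

definition is_sol :: "(real \<Rightarrow> 'n::euclidean_space \<Rightarrow> 'n) \<Rightarrow> 'n \<Rightarrow> (real \<Rightarrow> 'n) \<Rightarrow> bool" where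
  "is_sol F x \<xi> \<longleftrightarrow> (\<forall>t<0. \<xi> t = x) \<and> (\<forall>t\<ge>0. ((\<lambda>s. F s (\<xi> s)) has_integral (\<xi> t - x)) {0..t})"

lemma sol_cont:
  fixes \<xi> :: "real \<Rightarrow> 'n::euclidean_space"
  assumes "\<And>t. t \<in> {0..T} \<Longrightarrow> ((\<lambda>s. F s (\<xi> s)) has_integral (\<xi> t - x)) {0..t}"
  shows "continuous_on {0..T} \<xi>"
proof (cases "T \<ge> 0")
  case True
  have int: "(\<lambda>s. F s (\<xi> s)) integrable_on {0..T}" using assms[of T] True by auto
  have "continuous_on {0..T} (\<lambda>t. x + integral {0..t} (\<lambda>s. F s (\<xi> s)))"
    by (intro continuous_intros indefinite_integral_continuous_1 int)
  moreover have "\<And>t. t \<in> {0..T} \<Longrightarrow> x + integral {0..t} (\<lambda>s. F s (\<xi> s)) = \<xi> t"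
    using assms by (metis add.commute diff_add_cancel integral_unique)
  ultimately show ?thesis by (rule continuous_on_eq) auto
next
  case False
  then show ?thesis by simp
qed

lemma sol_unique:
  fixes \<xi> \<eta> :: "real \<Rightarrow> 'n::euclidean_space"
  assumes lip: "\<And>s y z. s \<in> {0..T} \<Longrightarrow> norm (F s y - F s z) \<le> L * norm (y - z)" and L: "L \<ge> 0"
    and N: "negligible N" and FG: "\<And>s y. s \<in> {0..T} - N \<Longrightarrow> F s y = G s y"
    and sF: "\<And>t. t \<in> {0..T} \<Longrightarrow> ((\<lambda>s. F s (\<xi> s)) has_integral (\<xi> t - x)) {0..t}"
    and sG: "\<And>t. t \<in> {0..T} \<Longrightarrow> ((\<lambda>s. G s (\<eta> s)) has_integral (\<eta> t - x)) {0..t}"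
    and t: "t \<in> {0..T}"
  shows "\<xi> t = \<eta> t"
proof -
  define w where "w = (\<lambda>s. norm (\<xi> s - \<eta> s))"
  have cw: "continuous_on {0..T} w"
    unfolding w_def by (intro continuous_intros sol_cont[where F=F and x=x, OF sF] sol_cont[where F=G and x=x, OF sG])
  have "w t = 0"
  proof (rule gronwall0[OF cw _ _ L t])
    fix r assume r: "r \<in> {0..T}"
    show "0 \<le> w r" by (simp add: w_def)
    have sub: "{0..r} \<subseteq> {0..T}" using r by auto
    have hF: "((\<lambda>s. F s (\<eta> s)) has_integral (\<eta> r - x)) {0..r}"
    proof (rule has_integral_spike[OF N _ sG[OF r]])
      fix s assume "s \<in> {0..r} - N"
      then have "s \<in> {0..T} - N" using sub by blast
      then show "F s (\<eta> s) = G s (\<eta> s)" by (rule FG)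
    qed
    have hd: "((\<lambda>s. F s (\<xi> s) - F s (\<eta> s)) has_integral (\<xi> r - \<eta> r)) {0..r}"
      using has_integral_diff[OF sF[OF r] hF] by simp
    have iw: "w integrable_on {0..r}"
      by (rule integrable_continuous_interval) (rule continuous_on_subset[OF cw sub])
    have "norm (integral {0..r} (\<lambda>s. F s (\<xi> s) - F s (\<eta> s))) \<le> integral {0..r} (\<lambda>s. L * w s)"
    proof (rule integral_norm_bound_integral)
      show "(\<lambda>s. F s (\<xi> s) - F s (\<eta> s)) integrable_on {0..r}" using hd by blast
      show "(\<lambda>s. L * w s) integrable_on {0..r}" using iw by (rule integrable_on_mult_right)
      fix s assume "s \<in> {0..r}"
      then have "s \<in> {0..T}" using sub by blast
      then show "norm (F s (\<xi> s) - F s (\<eta> s)) \<le> L * w s" unfolding w_def by (rule lip)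
    qed
    then show "w r \<le> L * integral {0..r} w"
      using integral_unique[OF hd] by (simp add: w_def)
  qed
  then show ?thesis by (simp add: w_def)
qed

lemma int_F:
  fixes F :: "real \<Rightarrow> 'n::euclidean_space \<Rightarrow> 'n"
  assumes bnd: "\<And>s y. s \<ge> 0 \<Longrightarrow> norm (F s y) \<le> M"
    and meas: "(\<lambda>s. F s (\<xi> s)) \<in> borel_measurable (lebesgue_on {0..t})"
  shows "(\<lambda>s. F s (\<xi> s)) integrable_on {0..t}"
proof (rule measurable_bounded_by_integrable_imp_integrable[OF meas, where g="\<lambda>_. M"])
  show "(\<lambda>_. M) integrable_on {0..t}" by auto
  show "\<And>s. s \<in> {0..t} \<Longrightarrow> norm (F s (\<xi> s)) \<le> M" using bnd by auto
qed auto

lemma sol_exists: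
  fixes F :: "real \<Rightarrow> 'n::euclidean_space \<Rightarrow> 'n"
  assumes bnd: "\<And>s y. s \<ge> 0 \<Longrightarrow> norm (F s y) \<le> M"
    and lip: "\<And>s y z. s \<ge> 0 \<Longrightarrow> norm (F s y - F s z) \<le> L * norm (y - z)" and L: "L \<ge> 0"
    and meas: "\<And>t \<xi>. t \<ge> 0 \<Longrightarrow> continuous_on {0..t} \<xi> \<Longrightarrow> (\<lambda>s. F s (\<xi> s)) \<in> borel_measurable (lebesgue_on {0..t})"
  shows "\<exists>\<xi>. is_sol F x \<xi>"
proof -
  define phi where "phi = rec_nat (\<lambda>t. x) (\<lambda>n p t. x + integral {0..t} (\<lambda>s. F s (p s)))"
  have phi0: "phi 0 = (\<lambda>t. x)" by (simp add: phi_def)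
  have phiS: "phi (Suc n) = (\<lambda>t. x + integral {0..t} (\<lambda>s. F s (phi n s)))" for n by (simp add: phi_def)
  have M: "M \<ge> 0" using bnd[of 0 x] norm_ge_zero order_trans by blast
  have intc: "(\<lambda>s. F s (\<xi> s)) integrable_on {0..t}" if "t \<ge> 0" "continuous_on {0..t} \<xi>" for t \<xi>
    by (rule int_F[where F=F and \<xi>=\<xi>, OF bnd meas[OF that]])
  have cont: "\<forall>t\<ge>0. continuous_on {0..t} (phi n)" for n
  proof (induction n)
    case 0 then show ?case by (simp add: phi0)
  next
    case (Suc n)
    show ?case
    proof (intro allI impI)
      fix t :: real assume t: "t \<ge> 0"
      have "(\<lambda>s. F s (phi n s)) integrable_on {0..t}" using Suc t intc by blast
      then show "continuous_on {0..t} (phi (Suc n))"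
        unfolding phiS by (intro continuous_intros indefinite_integral_continuous_1)
    qed
  qed
  have intn: "(\<lambda>s. F s (phi n s)) integrable_on {0..t}" if "t \<ge> 0" for n t
    using cont that intc by blast
  have est: "\<forall>t\<ge>0. norm (phi (Suc n) t - phi n t) \<le> M * L ^ n * t ^ Suc n / fact (Suc n)" for n
  proof (induction n)
    case 0
    show ?case
    proof (intro allI impI)
      fix t :: real assume t: "t \<ge> 0"
      have "norm (integral {0..t} (\<lambda>s. F s x)) \<le> integral {0..t} (\<lambda>s. M)"
        by (rule integral_norm_bound_integral) (use intn[OF t, of 0] bnd in \<open>auto simp: phi0\<close>)
      then show "norm (phi (Suc 0) t - phi 0 t) \<le> M * L ^ 0 * t ^ Suc 0 / fact (Suc 0)"
        using t by (simp add: phiS phi0 mult.commute)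
    qed
  next
    case (Suc n)
    show ?case
    proof (intro allI impI)
      fix t :: real assume t: "t \<ge> 0"
      have hp: "((\<lambda>r. L * (M * L ^ n / fact (Suc n)) * r ^ Suc n) has_integral
                 L * (M * L ^ n / fact (Suc n)) * (t ^ Suc (Suc n) / Suc (Suc n))) {0..t}"
        using has_integral_pow0[OF t, of "Suc n"] by (intro has_integral_mult_right)
      have a: "phi (Suc m) t = x + integral {0..t} (\<lambda>s. F s (phi m s))" for m by (simp add: phiS)
      have "phi (Suc (Suc n)) t - phi (Suc n) t = integral {0..t} (\<lambda>s. F s (phi (Suc n) s)) - integral {0..t} (\<lambda>s. F s (phi n s))"
        unfolding a[of "Suc n"] a[of n] by simp
      also have "\<dots> = integral {0..t} (\<lambda>s. F s (phi (Suc n) s) - F s (phi n s))"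
        by (rule integral_diff[symmetric, OF intn[OF t] intn[OF t]])
      also have "norm \<dots> \<le> integral {0..t} (\<lambda>r. L * (M * L ^ n / fact (Suc n)) * r ^ Suc n)"
      proof (rule integral_norm_bound_integral)
        show "(\<lambda>s. F s (phi (Suc n) s) - F s (phi n s)) integrable_on {0..t}"
          by (intro integrable_diff intn t)
        show "(\<lambda>r. L * (M * L ^ n / fact (Suc n)) * r ^ Suc n) integrable_on {0..t}" using hp by blast
        fix s assume s: "s \<in> {0..t}"
        have "norm (F s (phi (Suc n) s) - F s (phi n s)) \<le> L * norm (phi (Suc n) s - phi n s)"
          using lip s by auto
        also have "\<dots> \<le> L * (M * L ^ n * s ^ Suc n / fact (Suc n))"
          using Suc s L by (intro mult_left_mono) auto
        finally show "norm (F s (phi (Suc n) s) - F s (phi n s)) \<le> L * (M * L ^ n / fact (Suc n)) * s ^ Suc n"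
          by (simp add: field_simps)
      qed
      also have "\<dots> = L * (M * L ^ n / fact (Suc n)) * (t ^ Suc (Suc n) / Suc (Suc n))"
        using hp by (rule integral_unique)
      also have "\<dots> = M * L ^ Suc n * t ^ Suc (Suc n) / fact (Suc (Suc n))"
        by (simp add: field_simps)
      finally show "norm (phi (Suc (Suc n)) t - phi (Suc n) t) \<le> M * L ^ Suc n * t ^ Suc (Suc n) / fact (Suc (Suc n))" .
    qed
  qed
  have neg: "phi n t = x" if "t < 0" for n t
    using that by (cases n) (auto simp: phi0 phiS)
  define psi where "psi = (\<lambda>t. x + (\<Sum>k. phi (Suc k) t - phi k t))"
  have conv: "(\<lambda>n. phi n t) \<longlonglongrightarrow> psi t" for t
  proof -
    have summ: "summable (\<lambda>k. phi (Suc k) t - phi k t)"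
    proof (cases "t \<ge> 0")
      case True
      have s0: "summable (\<lambda>k. (L * t) ^ k / fact k)"
        using summable_exp[of "L * t"] by (simp add: divide_inverse mult.commute)
      have s1: "summable (\<lambda>k. M * t * ((L * t) ^ k / fact k))"
        by (intro summable_mult s0)
      show ?thesis
      proof (rule summable_comparison_test'[OF s1])
        fix k :: nat
        have "norm (phi (Suc k) t - phi k t) \<le> M * L ^ k * t ^ Suc k / fact (Suc k)"
          using est True by blast
        also have "\<dots> \<le> M * L ^ k * t ^ Suc k / fact k"
          using True M L by (intro divide_left_mono) (auto intro!: fact_mono)
        also have "\<dots> = M * t * ((L * t) ^ k / fact k)"
          by (simp add: power_mult_distrib)
        finally show "norm (phi (Suc k) t - phi k t) \<le> M * t * ((L * t) ^ k / fact k)" .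
      qed
    next
      case False
      then show ?thesis using neg by simp
    qed
    have "(\<lambda>n. x + (\<Sum>k<n. phi (Suc k) t - phi k t)) \<longlonglongrightarrow> psi t"
      unfolding psi_def by (intro tendsto_add tendsto_const summable_LIMSEQ summ)
    moreover have "x + (\<Sum>k<n. phi (Suc k) t - phi k t) = phi n t" for n
      using sum_lessThan_telescope[of "\<lambda>i. phi i t" n] by (simp add: phi0)
    ultimately show ?thesis by simp
  qed
  have "is_sol F x psi"
    unfolding is_sol_def
  proof (intro conjI allI impI)
    fix t :: real assume "t < 0"
    then have "(\<lambda>n. phi n t) \<longlonglongrightarrow> x" using neg by simp
    then show "psi t = x" using conv[of t] LIMSEQ_unique by blast
  next
    fix t :: real assume t: "t \<ge> 0"
    have cv: "(\<lambda>k. F s (phi k s)) \<longlonglongrightarrow> F s (psi s)" if s: "s \<in> {0..t}" for s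
    proof -
      have "(\<lambda>k. L * norm (phi k s - psi s)) \<longlonglongrightarrow> L * 0"
        by (intro tendsto_mult tendsto_const tendsto_norm_zero LIM_zero conv)
      then have l0: "(\<lambda>k. L * norm (phi k s - psi s)) \<longlonglongrightarrow> 0" by simp
      have "(\<lambda>k. F s (phi k s) - F s (psi s)) \<longlonglongrightarrow> 0"
      proof (rule Lim_null_comparison[OF _ l0])
        show "\<forall>\<^sub>F k in sequentially. norm (F s (phi k s) - F s (psi s)) \<le> L * norm (phi k s - psi s)"
          using lip s by (intro always_eventually allI) auto
      qed
      then show ?thesis by (rule LIM_zero_cancel)
    qed
    have bd: "\<And>k s. s \<in> {0..t} \<Longrightarrow> norm (F s (phi k s)) \<le> M" using bnd by auto
    have ic: "(\<lambda>s::real. M) integrable_on {0..t}" by auto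
    note D = dominated_convergence[of "\<lambda>k s. F s (phi k s)" "{0..t}" "\<lambda>s. M" "\<lambda>s. F s (psi s)", OF intn[OF t] ic bd cv]
    have dc: "(\<lambda>s. F s (psi s)) integrable_on {0..t} \<and>
      (\<lambda>k. integral {0..t} (\<lambda>s. F s (phi k s))) \<longlonglongrightarrow> integral {0..t} (\<lambda>s. F s (psi s))"
      using D by blast
    have "(\<lambda>k. phi (Suc k) t) \<longlonglongrightarrow> x + integral {0..t} (\<lambda>s. F s (psi s))"
      unfolding phiS using dc by (intro tendsto_add tendsto_const) auto
    moreover have "(\<lambda>k. phi (Suc k) t) \<longlonglongrightarrow> psi t" using conv[of t] by (rule LIMSEQ_Suc)
    ultimately have "psi t = x + integral {0..t} (\<lambda>s. F s (psi s))" using LIMSEQ_unique by blast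
    then have e: "psi t - x = integral {0..t} (\<lambda>s. F s (psi s))" by simp
    show "((\<lambda>s. F s (psi s)) has_integral (psi t - x)) {0..t}"
      unfolding e using dc by (intro integrable_integral) blast
  qed
  then show ?thesis by blast
qed

context
  fixes f :: "'n::euclidean_space \<Rightarrow> 'u::euclidean_space \<Rightarrow> 'd::euclidean_space \<Rightarrow> 'n"
    and U :: "'u set" and D :: "'d set" and M L :: real
  assumes fc: "continuous_on (UNIV \<times> U \<times> D) (\<lambda>(x, u, d). f x u d)"
    and fbndA: "\<forall>x u d. u \<in> U \<and> d \<in> D \<longrightarrow> norm (f x u d) \<le> M"
    and flipA: "\<forall>x y u d. u \<in> U \<and> d \<in> D \<longrightarrow> norm (f x u d - f y u d) \<le> L * norm (x - y)"
    and L: "L \<ge> 0"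
begin

lemma fbnd: "u \<in> U \<Longrightarrow> d \<in> D \<Longrightarrow> norm (f x u d) \<le> M"
  using fbndA by blast

lemma flip: "u \<in> U \<Longrightarrow> d \<in> D \<Longrightarrow> norm (f x u d - f y u d) \<le> L * norm (x - y)"
  using flipA by blast

lemma meas_F:
  assumes u: "u \<in> signals U" and d: "d \<in> signals D" and t: "t \<ge> 0" and c: "continuous_on {0..t} \<xi>"
  shows "(\<lambda>s. f (\<xi> s) (u s) (d s)) \<in> borel_measurable (lebesgue_on {0..t})"
proof -
  have eq: "lebesgue_on {0..t} = restrict_space (lebesgue_on {0..}) {0..t}"
    using t by (subst restrict_restrict_space) (auto simp: Int_absorb1)
  have mu: "u \<in> borel_measurable (lebesgue_on {0..t})"
    unfolding eq by (rule measurable_restrict_space1) (use u in \<open>simp add: signals_def\<close>)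
  have md: "d \<in> borel_measurable (lebesgue_on {0..t})"
    unfolding eq by (rule measurable_restrict_space1) (use d in \<open>simp add: signals_def\<close>)
  have mx: "\<xi> \<in> borel_measurable (lebesgue_on {0..t})"
    by (rule continuous_imp_measurable_on_sets_lebesgue[OF c]) auto
  have mh: "(\<lambda>s. (\<xi> s, u s, d s)) \<in> borel_measurable (lebesgue_on {0..t})"
    by (intro borel_measurable_Pair mx mu md)
  have mh2: "(\<lambda>s. (\<xi> s, u s, d s)) \<in> lebesgue_on {0..t} \<rightarrow>\<^sub>M restrict_space borel (UNIV \<times> U \<times> D)"
  proof (rule measurable_restrict_space2[OF _ mh])
    show "(\<lambda>s. (\<xi> s, u s, d s)) \<in> space (lebesgue_on {0..t}) \<rightarrow> UNIV \<times> U \<times> D"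
      using u d unfolding signals_def by (auto simp: space_restrict_space)
  qed
  have mf: "(\<lambda>(x, u, d). f x u d) \<in> borel_measurable (restrict_space borel (UNIV \<times> U \<times> D))"
    by (rule borel_measurable_continuous_on_restrict[OF fc])
  from measurable_compose[OF mh2 mf] show ?thesis by simp
qed

lemma sig_in: "w \<in> signals A \<Longrightarrow> s \<ge> 0 \<Longrightarrow> w s \<in> A"
  unfolding signals_def by blast

lemma flip_sig:
  assumes "u \<in> signals U" "d \<in> signals D" "s \<ge> 0"
  shows "norm (f y (u s) (d s) - f z (u s) (d s)) \<le> L * norm (y - z)"
  by (rule flip[OF sig_in[OF assms(1,3)] sig_in[OF assms(2,3)]])

lemma fbnd_sig:
  assumes "u \<in> signals U" "d \<in> signals D" "s \<ge> 0"
  shows "norm (f y (u s) (d s)) \<le> M"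
  by (rule fbnd[OF sig_in[OF assms(1,3)] sig_in[OF assms(2,3)]])

lemma is_sol_uniq:
  assumes u: "u \<in> signals U" and d: "d \<in> signals D"
    and that: "is_sol (\<lambda>s y. f y (u s) (d s)) x \<xi>" "is_sol (\<lambda>s y. f y (u s) (d s)) x \<eta>"
  shows "\<xi> = \<eta>"
  proof
  fix t :: real
  show "\<xi> t = \<eta> t"
  proof (cases "t < 0")
    case True then show ?thesis using that unfolding is_sol_def by simp
  next
    case False
    show ?thesis
    proof (rule sol_unique[where F="\<lambda>s y. f y (u s) (d s)" and G="\<lambda>s y. f y (u s) (d s)" and N="{}" and L=L and T=t and x=x])
      show "\<And>s y z. s \<in> {0..t} \<Longrightarrow> norm (f y (u s) (d s) - f z (u s) (d s)) \<le> L * norm (y - z)"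
        using flip_sig[OF u(1) d(1)] by simp
      show "\<And>r. r \<in> {0..t} \<Longrightarrow> ((\<lambda>s. f (\<xi> s) (u s) (d s)) has_integral \<xi> r - x) {0..r}"
        using that(1) unfolding is_sol_def by auto
      show "\<And>r. r \<in> {0..t} \<Longrightarrow> ((\<lambda>s. f (\<eta> s) (u s) (d s)) has_integral \<eta> r - x) {0..r}"
        using that(2) unfolding is_sol_def by auto
    qed (use L False in auto)
  qed
qed

lemma traj_is_sol:
  assumes u: "u \<in> signals U" and d: "d \<in> signals D"
  shows "is_sol (\<lambda>s y. f y (u s) (d s)) x (traj f x u d)"
proof -
  have ex: "\<exists>\<xi>. is_sol (\<lambda>s y. f y (u s) (d s)) x \<xi>"
  proof (rule sol_exists[where M=M and L=L])
    show "\<And>s y. 0 \<le> s \<Longrightarrow> norm (f y (u s) (d s)) \<le> M"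
      using fbnd_sig[OF u(1) d(1)] by simp
    show "\<And>s y z. 0 \<le> s \<Longrightarrow> norm (f y (u s) (d s) - f z (u s) (d s)) \<le> L * norm (y - z)"
      using flip_sig[OF u(1) d(1)] by simp
    show "L \<ge> 0" by (rule L)
    show "\<And>t \<xi>. 0 \<le> t \<Longrightarrow> continuous_on {0..t} \<xi> \<Longrightarrow> (\<lambda>s. f (\<xi> s) (u s) (d s)) \<in> borel_measurable (lebesgue_on {0..t})"
      by (rule meas_F[OF u d])
  qed
  have un: "\<xi> = \<eta>" if "is_sol (\<lambda>s y. f y (u s) (d s)) x \<xi>" "is_sol (\<lambda>s y. f y (u s) (d s)) x \<eta>" for \<xi> \<eta>
    by (rule is_sol_uniq[OF u d that])
  have "traj f x u d = (THE \<xi>. is_sol (\<lambda>s y. f y (u s) (d s)) x \<xi>)"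
    unfolding traj_def is_sol_def by (rule refl)
  moreover obtain \<xi>0 where x0: "is_sol (\<lambda>s y. f y (u s) (d s)) x \<xi>0" using ex by blast
  have "is_sol (\<lambda>s y. f y (u s) (d s)) x (THE \<xi>. is_sol (\<lambda>s y. f y (u s) (d s)) x \<xi>)"
    by (rule theI[where P="\<lambda>\<xi>. is_sol (\<lambda>s y. f y (u s) (d s)) x \<xi>", OF x0]) (rule un[OF _ x0])
  ultimately show ?thesis by simp
qed

lemma traj_neg:
  assumes "u \<in> signals U" "d \<in> signals D" "t \<le> 0"
  shows "traj f x u d t = x"
proof -
  have S: "is_sol (\<lambda>s y. f y (u s) (d s)) x (traj f x u d)" by (rule traj_is_sol[OF assms(1,2)])
  show ?thesis
  proof (cases "t < 0")
    case True then show ?thesis using S unfolding is_sol_def by blast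
  next
    case False
    then have t0: "t = 0" using assms by simp
    have "((\<lambda>s. f (traj f x u d s) (u s) (d s)) has_integral (traj f x u d 0 - x)) {0..0}"
      using S unfolding is_sol_def by blast
    then have "((\<lambda>s. f (traj f x u d s) (u s) (d s)) has_integral (traj f x u d 0 - x)) {0}"
      by simp
    then have "traj f x u d 0 - x = 0" by (rule has_integral_unique[OF _ has_integral_refl(2)])
    then show ?thesis using t0 by simp
  qed
qed

lemma traj_int:
  assumes "u \<in> signals U" "d \<in> signals D" "t \<ge> 0"
  shows "((\<lambda>s. f (traj f x u d s) (u s) (d s)) has_integral traj f x u d t - x) {0..t}"
  using traj_is_sol[OF assms(1,2), where x=x] assms(3) unfolding is_sol_def by blast

lemma traj_causal:
  assumes u: "u \<in> signals U" "u' \<in> signals U" and d: "d \<in> signals D" "d' \<in> signals D"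
    and N: "negligible N" and eq: "\<And>s. s \<in> {0..T} - N \<Longrightarrow> u s = u' s \<and> d s = d' s"
    and t: "t \<le> T"
  shows "traj f x u d t = traj f x u' d' t"
proof (cases "t \<le> 0")
  case True then show ?thesis using traj_neg[OF u(1) d(1) True] traj_neg[OF u(2) d(2) True] by simp
next
  case False
  show ?thesis
  proof (rule sol_unique[where F="\<lambda>s y. f y (u s) (d s)" and G="\<lambda>s y. f y (u' s) (d' s)" and N=N and L=L and T=T and x=x])
    show "\<And>s y z. s \<in> {0..T} \<Longrightarrow> norm (f y (u s) (d s) - f z (u s) (d s)) \<le> L * norm (y - z)"
      using flip_sig[OF u(1) d(1)] by simp
    show "\<And>r. r \<in> {0..T} \<Longrightarrow> ((\<lambda>s. f (traj f x u d s) (u s) (d s)) has_integral traj f x u d r - x) {0..r}"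
      using traj_int[OF u(1) d(1)] by simp
    show "\<And>r. r \<in> {0..T} \<Longrightarrow> ((\<lambda>s. f (traj f x u' d' s) (u' s) (d' s)) has_integral traj f x u' d' r - x) {0..r}"
      using traj_int[OF u(2) d(2)] by simp
    show "\<And>s y. s \<in> {0..T} - N \<Longrightarrow> f y (u s) (d s) = f y (u' s) (d' s)"
      using eq by auto
  qed (use L N False t in auto)
qed

lemma traj_cat:
  assumes u: "u \<in> signals U" "v \<in> signals U" and d: "d \<in> signals D" "e \<in> signals D"
    and T: "T \<ge> 0"
  shows "\<And>t. t \<le> T \<Longrightarrow> traj f x (cat T u v) (cat T d e) t = traj f x u d t"
    and "\<And>r. r \<ge> 0 \<Longrightarrow> traj f x (cat T u v) (cat T d e) (T + r) = traj f (traj f x u d T) v e r"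
proof -
  have cu: "cat T u v \<in> signals U" by (rule signals_cat[OF u T])
  have cd: "cat T d e \<in> signals D" by (rule signals_cat[OF d T])
  show A: "traj f x (cat T u v) (cat T d e) t = traj f x u d t" if "t \<le> T" for t
    by (rule traj_causal[OF cu u(1) cd d(1), where N="{}" and T=T]) (use that in \<open>auto simp: cat_def\<close>)
  define y where "y = traj f x u d T"
  define \<zeta> where "\<zeta> = (\<lambda>t. if t \<le> T then traj f x u d t else traj f y v e (t - T))"
  have sol1: "is_sol (\<lambda>s y. f y (u s) (d s)) x (traj f x u d)" by (rule traj_is_sol[OF u(1) d(1)])
  have sol2: "is_sol (\<lambda>s z. f z (v s) (e s)) y (traj f y v e)" by (rule traj_is_sol[OF u(2) d(2)])
  have "is_sol (\<lambda>s y. f y (cat T u v s) (cat T d e s)) x \<zeta>"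
    unfolding is_sol_def
  proof (intro conjI allI impI)
    fix t :: real assume "t < 0"
    then show "\<zeta> t = x" using T traj_neg[OF u(1) d(1)] by (simp add: \<zeta>_def)
  next
    fix t :: real assume t: "t \<ge> 0"
    show "((\<lambda>s. f (\<zeta> s) (cat T u v s) (cat T d e s)) has_integral \<zeta> t - x) {0..t}"
    proof (cases "t \<le> T")
      case True
      have h: "((\<lambda>s. f (traj f x u d s) (u s) (d s)) has_integral traj f x u d t - x) {0..t}"
        using traj_int[OF u(1) d(1) t] .
      have e: "\<zeta> t = traj f x u d t" using True by (simp add: \<zeta>_def)
      show ?thesis unfolding e
        by (rule has_integral_eq[rotated, OF h]) (use True in \<open>auto simp: \<zeta>_def cat_def\<close>)
    next
      case False
      have h1: "((\<lambda>s. f (\<zeta> s) (cat T u v s) (cat T d e s)) has_integral y - x) {0..T}"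
      proof -
        have h: "((\<lambda>s. f (traj f x u d s) (u s) (d s)) has_integral traj f x u d T - x) {0..T}"
          using traj_int[OF u(1) d(1) T] .
        show ?thesis
          unfolding y_def by (rule has_integral_eq[rotated, OF h]) (auto simp: \<zeta>_def cat_def)
      qed
      have h0: "((\<lambda>r. f (traj f y v e r) (v r) (e r)) has_integral traj f y v e (t - T) - y) {0..t - T}"
        using traj_int[OF u(2) d(2), of "t - T" y] False by simp
      have h0': "(((\<lambda>s. f (traj f y v e (s - T)) (v (s - T)) (e (s - T))) \<circ> (+) T) has_integral traj f y v e (t - T) - y) {0..t - T}"
        using h0 by (simp add: o_def)
      have h2': "((\<lambda>s. f (traj f y v e (s - T)) (v (s - T)) (e (s - T))) has_integral traj f y v e (t - T) - y) {T..t}"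
        using h0' unfolding has_integral_shift_Icc_real by simp
      have h2: "((\<lambda>s. f (\<zeta> s) (cat T u v s) (cat T d e s)) has_integral traj f y v e (t - T) - y) {T..t}"
        by (rule has_integral_spike_finite[OF _ _ h2', of "{T}"]) (auto simp: \<zeta>_def cat_def)
      have "((\<lambda>s. f (\<zeta> s) (cat T u v s) (cat T d e s)) has_integral (y - x) + (traj f y v e (t - T) - y)) {0..t}"
        by (rule has_integral_combine[OF T _ h1 h2]) (use False in auto)
      then show ?thesis using False by (simp add: \<zeta>_def)
    qed
  qed
  then have zt: "\<zeta> = traj f x (cat T u v) (cat T d e)"
    using traj_is_sol[OF cu cd] is_sol_uniq[OF cu cd] by blast
  show "traj f x (cat T u v) (cat T d e) (T + r) = traj f (traj f x u d T) v e r" if r: "r \<ge> 0" for r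
  proof (cases "r = 0")
    case True
    then show ?thesis using traj_neg[OF u(2) d(2), of 0] unfolding zt[symmetric] by (simp add: \<zeta>_def y_def)
  next
    case False
    then show ?thesis using r unfolding zt[symmetric] by (simp add: \<zeta>_def y_def)
  qed
qed
end

lemma disc_bnd:
  fixes \<gamma> s h K :: real
  assumes "\<gamma> > 0" "s \<ge> 0" "\<bar>h\<bar> \<le> K"
  shows "\<bar>exp (- \<gamma> * s) * h\<bar> \<le> K"
proof -
  have "\<gamma> * s \<ge> 0" using assms by (intro mult_nonneg_nonneg) auto
  then have "exp (- \<gamma> * s) \<le> 1" by simp
  then have "exp (- \<gamma> * s) * \<bar>h\<bar> \<le> 1 * \<bar>h\<bar>"
    by (intro mult_right_mono) auto
  then have "\<bar>exp (- \<gamma> * s) * h\<bar> \<le> 1 * \<bar>h\<bar>"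
    by (simp add: abs_mult)
  then show ?thesis using assms by simp
qed

lemma sup_props:
  fixes \<xi> :: "real \<Rightarrow> 'n"
  assumes g: "\<gamma> > 0" and cK: "\<And>y. \<bar>c y\<bar> \<le> K" and t: "t \<ge> 0"
  shows "bdd_above ((\<lambda>s. exp (- \<gamma> * s) * c (\<xi> s)) ` {0..t})"
    and "\<bar>(SUP s\<in>{0..t}. exp (- \<gamma> * s) * c (\<xi> s))\<bar> \<le> K"
proof -
  have b: "\<And>s. s \<in> {0..t} \<Longrightarrow> \<bar>exp (- \<gamma> * s) * c (\<xi> s)\<bar> \<le> K"
    using disc_bnd[OF g _ cK] by auto
  show ba: "bdd_above ((\<lambda>s. exp (- \<gamma> * s) * c (\<xi> s)) ` {0..t})"
    using b by (intro bdd_aboveI2[where M=K]) (auto simp: abs_le_iff)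
  have "(SUP s\<in>{0..t}. exp (- \<gamma> * s) * c (\<xi> s)) \<le> K"
    using b t by (intro cSUP_least) (auto simp: abs_le_iff)
  moreover have "exp (- \<gamma> * 0) * c (\<xi> 0) \<le> (SUP s\<in>{0..t}. exp (- \<gamma> * s) * c (\<xi> s))"
    using t ba by (intro cSUP_upper) auto
  moreover have "- K \<le> exp (- \<gamma> * 0) * c (\<xi> 0)" using cK[of "\<xi> 0"] by simp
  ultimately show "\<bar>(SUP s\<in>{0..t}. exp (- \<gamma> * s) * c (\<xi> s))\<bar> \<le> K" by linarith
qed

lemma payoff_bnd:
  assumes g: "\<gamma> > 0" and lK: "\<And>y. \<bar>l y\<bar> \<le> K" and cK: "\<And>y. \<bar>c y\<bar> \<le> K" and t: "t \<ge> 0"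
  shows "\<bar>ra_payoff \<gamma> l c \<xi> t\<bar> \<le> K"
  using disc_bnd[OF g t lK[of "\<xi> t"]] sup_props(2)[where c=c and \<xi>=\<xi>, OF g cK t] unfolding ra_payoff_def by linarith

lemma payoff_local:
  assumes "\<And>s. s \<in> {0..t} \<Longrightarrow> \<xi> s = \<eta> s" and t0: "t \<ge> 0"
  shows "ra_payoff \<gamma> l c \<xi> t = ra_payoff \<gamma> l c \<eta> t"
proof -
  have "\<xi> t = \<eta> t" if "t \<ge> 0" using assms that by auto
  moreover have "(SUP s\<in>{0..t}. exp (- \<gamma> * s) * c (\<xi> s)) = (SUP s\<in>{0..t}. exp (- \<gamma> * s) * c (\<eta> s))"
    using assms by (intro SUP_cong) auto
  ultimately show ?thesis unfolding ra_payoff_def using t0 by simp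
qed

lemma scale_sup:
  fixes h :: "'a \<Rightarrow> real"
  assumes a: "a > 0" and A: "A \<noteq> {}" and b: "bdd_above (h ` A)"
  shows "(SUP x\<in>A. a * h x) = a * (SUP x\<in>A. h x)"
proof (rule antisym)
  show "(SUP x\<in>A. a * h x) \<le> a * (SUP x\<in>A. h x)"
    using a b by (intro cSUP_least A mult_left_mono cSUP_upper) auto
  have b2: "bdd_above ((\<lambda>x. a * h x) ` A)"
  proof -
    obtain m where "\<And>x. x \<in> A \<Longrightarrow> h x \<le> m" using b by (auto simp: bdd_above_def)
    then show ?thesis using a by (intro bdd_aboveI2[where M="a * m"]) (auto intro: mult_left_mono)
  qed
  have "(SUP x\<in>A. h x) \<le> (SUP x\<in>A. a * h x) / a"
  proof (intro cSUP_least A)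
    fix x assume "x \<in> A"
    then have "a * h x \<le> (SUP x\<in>A. a * h x)" using b2 by (intro cSUP_upper)
    then show "h x \<le> (SUP x\<in>A. a * h x) / a" using a by (simp add: field_simps)
  qed
  then show "a * (SUP x\<in>A. h x) \<le> (SUP x\<in>A. a * h x)" using a by (simp add: field_simps)
qed

lemma exp_split: "exp (- \<gamma> * (a + b)) = exp (- \<gamma> * a) * exp (- (\<gamma>::real) * b)"
proof -
  have "- \<gamma> * (a + b) = (- \<gamma> * a) + (- \<gamma> * b)" by algebra
  then show ?thesis by (simp only: exp_add)
qed

lemma exp_split': "exp (- (\<gamma> * (a + b))) = exp (- (\<gamma> * a)) * exp (- ((\<gamma>::real) * b))"
  using exp_split[of \<gamma> a b] by simp

lemma payoff_split:
  fixes \<xi> \<xi>' \<eta> :: "real \<Rightarrow> 'n"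
  assumes g: "\<gamma> > 0" and cK: "\<And>y. \<bar>c y\<bar> \<le> K" and T: "T \<ge> 0" and r: "r \<ge> 0"
    and e1: "\<And>s. s \<in> {0..T} \<Longrightarrow> \<xi>' s = \<xi> s" and e2: "\<And>r. r \<ge> 0 \<Longrightarrow> \<xi>' (T + r) = \<eta> r"
  shows "ra_payoff \<gamma> l c \<xi>' (T + r) =
    max (SUP s\<in>{0..T}. exp (- \<gamma> * s) * c (\<xi> s)) (exp (- \<gamma> * T) * ra_payoff \<gamma> l c \<eta> r)"
proof -
  define g where "g = (\<lambda>s. exp (- \<gamma> * s) * c (\<xi>' s))"
  have un: "{0..T + r} = {0..T} \<union> {T..T + r}" using T r by auto
  have "(SUP s\<in>{0..T + r}. g s) = sup (SUP s\<in>{0..T}. g s) (SUP s\<in>{T..T + r}. g s)"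
    unfolding un
  proof (rule cSUP_union)
    have b: "bdd_above (g ` {0..T + r})" unfolding g_def
      using T r by (intro sup_props(1)[where c=c, OF g cK]) auto
    show "bdd_above (g ` {0..T})"
      by (rule bdd_above_mono[OF b]) (use r in auto)
    show "bdd_above (g ` {T..T + r})"
      by (rule bdd_above_mono[OF b]) (use T in auto)
  qed (use T r in auto)
  also have "(SUP s\<in>{0..T}. g s) = (SUP s\<in>{0..T}. exp (- \<gamma> * s) * c (\<xi> s))"
    unfolding g_def using e1 by (intro SUP_cong) auto
  also have "{T..T + r} = (\<lambda>s. T + s) ` {0..r}"
    using T by (auto simp: image_iff intro!: bexI[where x="_ - T"])
  also have "(SUP s\<in>(\<lambda>s. T + s) ` {0..r}. g s) = (SUP s\<in>{0..r}. exp (- \<gamma> * T) * (exp (- \<gamma> * s) * c (\<eta> s)))"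
    unfolding image_image g_def using e2 by (intro SUP_cong) (auto simp: exp_split exp_split' mult.assoc)
  also have "\<dots> = exp (- \<gamma> * T) * (SUP s\<in>{0..r}. exp (- \<gamma> * s) * c (\<eta> s))"
    using r by (intro scale_sup sup_props(1)[where c=c, OF g cK]) auto
  finally have S: "(SUP s\<in>{0..T + r}. g s) = max (SUP s\<in>{0..T}. exp (- \<gamma> * s) * c (\<xi> s)) (exp (- \<gamma> * T) * (SUP s\<in>{0..r}. exp (- \<gamma> * s) * c (\<eta> s)))"
    by (simp add: sup_max)
  have E: "exp (- \<gamma> * (T + r)) * l (\<xi>' (T + r)) = exp (- \<gamma> * T) * (exp (- \<gamma> * r) * l (\<eta> r))"
    using e2[OF r] by (simp add: exp_split exp_split')
  have P: "exp (- \<gamma> * T) * max p q = max (exp (- \<gamma> * T) * p) (exp (- \<gamma> * T) * q)" for p q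
    by (simp add: max_def)
  show ?thesis
    unfolding ra_payoff_def S[unfolded g_def] E P by (simp add: max.assoc max.commute max.left_commute)
qed

lemma Icc_leb: "{a..b::real} \<in> sets lebesgue" by simp

lemma na_neg:
  assumes lam: "lam \<in> nonanticipative_strategies U D" and t: "t \<ge> 0"
    and u: "u \<in> signals U" "u' \<in> signals U" and N: "negligible N" and eq: "\<forall>s\<in>{0..t} - N. u s = u' s"
  shows "\<exists>N'. negligible N' \<and> (\<forall>s\<in>{0..t} - N'. lam u s = lam u' s)"
proof -
  have "AE s in lebesgue_on {0..t}. u s = u' s"
    unfolding ae_on_iff[OF Icc_leb] using N eq by blast
  then have "AE s in lebesgue_on {0..t}. lam u s = lam u' s"
    using lam t u unfolding nonanticipative_strategies_def by blast
  then show ?thesis unfolding ae_on_iff[OF Icc_leb] .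
qed

lemma na_sig:
  assumes "lam \<in> nonanticipative_strategies U D" "u \<in> signals U"
  shows "lam u \<in> signals D"
  using assms unfolding nonanticipative_strategies_def by blast

lemma na_intro:
  assumes sig: "\<And>u. u \<in> signals U \<Longrightarrow> lam u \<in> signals D"
    and na: "\<And>t u u' N. t \<ge> 0 \<Longrightarrow> u \<in> signals U \<Longrightarrow> u' \<in> signals U \<Longrightarrow> negligible N \<Longrightarrow>
        \<forall>s\<in>{0..t} - N. u s = u' s \<Longrightarrow> \<exists>N'. negligible N' \<and> (\<forall>s\<in>{0..t} - N'. lam u s = lam u' s)"
  shows "lam \<in> nonanticipative_strategies U D"
  unfolding nonanticipative_strategies_def
proof (intro CollectI conjI ballI allI impI)
  fix u assume "u \<in> signals U" then show "lam u \<in> signals D" by (rule sig)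
next
  fix t :: real and u u' assume t: "t \<ge> 0" and u: "u \<in> signals U" "u' \<in> signals U"
    and ae: "AE s in lebesgue_on {0..t}. u s = u' s"
  then obtain N where "negligible N" "\<forall>s\<in>{0..t} - N. u s = u' s"
    unfolding ae_on_iff[OF Icc_leb] by blast
  from na[OF t u this] show "AE s in lebesgue_on {0..t}. lam u s = lam u' s"
    unfolding ae_on_iff[OF Icc_leb] .
qed

lemma const_sig:
  assumes "a \<in> A" shows "(\<lambda>s. a) \<in> signals A"
  using assms unfolding signals_def by auto

lemma strategies_ne:
  assumes "D \<noteq> {}" shows "nonanticipative_strategies U D \<noteq> {}"
proof -
  obtain a where a: "a \<in> D" using assms by blast
  have "(\<lambda>u. \<lambda>s. a) \<in> nonanticipative_strategies U D"
    by (rule na_intro) (auto intro: const_sig[OF a])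
  then show ?thesis by blast
qed

lemma signals_ne:
  assumes "U \<noteq> {}" shows "signals U \<noteq> {}"
  using const_sig assms by blast

lemma shift_strat:
  assumes lam: "lam \<in> nonanticipative_strategies U D" and u: "u \<in> signals U" and T: "T \<ge> 0"
  shows "(\<lambda>v. \<lambda>r. lam (cat T u v) (T + r)) \<in> nonanticipative_strategies U D"
proof (rule na_intro)
  fix v assume "v \<in> signals U"
  then show "(\<lambda>r. lam (cat T u v) (T + r)) \<in> signals D"
    by (intro signals_shift na_sig[OF lam] signals_cat u T)
next
  fix t :: real and v v' N
  assume t: "t \<ge> 0" and v: "v \<in> signals U" "v' \<in> signals U" and N: "negligible N"
    and eq: "\<forall>s\<in>{0..t} - N. v s = v' s"
  have N1: "negligible ((+) T ` N)" by (rule negligible_translation[OF N])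
  have eq1: "\<forall>s\<in>{0..T + t} - (+) T ` N. cat T u v s = cat T u v' s"
  proof
    fix s assume s: "s \<in> {0..T + t} - (+) T ` N"
    show "cat T u v s = cat T u v' s"
    proof (cases "s \<le> T")
      case True then show ?thesis by (simp add: cat_def)
    next
      case False
      have "s - T \<notin> N"
      proof
        assume "s - T \<in> N"
        then have "T + (s - T) \<in> (+) T ` N" by blast
        then show False using s by simp
      qed
      then have "v (s - T) = v' (s - T)" using eq s False by auto
      then show ?thesis using False by (simp add: cat_def)
    qed
  qed
  obtain N2 where N2: "negligible N2" "\<forall>s\<in>{0..T + t} - N2. lam (cat T u v) s = lam (cat T u v') s"
    using na_neg[OF lam _ signals_cat[OF u v(1) T] signals_cat[OF u v(2) T] N1 eq1] T t by auto
  show "\<exists>N'. negligible N' \<and> (\<forall>s\<in>{0..t} - N'. lam (cat T u v) (T + s) = lam (cat T u v') (T + s))"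
  proof (intro exI conjI)
    show "negligible ((+) (- T) ` N2)" by (rule negligible_translation[OF N2(1)])
    show "\<forall>s\<in>{0..t} - (+) (- T) ` N2. lam (cat T u v) (T + s) = lam (cat T u v') (T + s)"
    proof
      fix s assume s: "s \<in> {0..t} - (+) (- T) ` N2"
      have "T + s \<notin> N2"
      proof
        assume "T + s \<in> N2"
        then have "- T + (T + s) \<in> (+) (- T) ` N2" by blast
        then show False using s by simp
      qed
      then show "lam (cat T u v) (T + s) = lam (cat T u v') (T + s)" using N2(2) s T by auto
    qed
  qed
qed

context
  fixes f :: "'n::euclidean_space \<Rightarrow> 'u::euclidean_space \<Rightarrow> 'd::euclidean_space \<Rightarrow> 'n"
    and U :: "'u set" and D :: "'d set" and M L :: real
  assumes fc: "continuous_on (UNIV \<times> U \<times> D) (\<lambda>(x, u, d). f x u d)"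
    and fbndA: "\<forall>x u d. u \<in> U \<and> d \<in> D \<longrightarrow> norm (f x u d) \<le> M"
    and flipA: "\<forall>x y u d. u \<in> U \<and> d \<in> D \<longrightarrow> norm (f x u d - f y u d) \<le> L * norm (x - y)"
    and L: "L \<ge> 0"
begin

lemmas tc = traj_causal[where f=f and U=U and D=D and M=M and L=L, OF fc fbndA flipA L]
lemmas tcat = traj_cat[where f=f and U=U and D=D and M=M and L=L, OF fc fbndA flipA L]

lemma glue_strat:
  assumes lam: "lam \<in> nonanticipative_strategies U D" and T: "T \<ge> 0"
    and mu: "\<And>z. mu z \<in> nonanticipative_strategies U D"
  shows "(\<lambda>u. cat T (lam u) (mu (traj f x u (lam u) T) (\<lambda>r. u (T + r)))) \<in> nonanticipative_strategies U D"
proof (rule na_intro)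
  fix u assume u: "u \<in> signals U"
  show "cat T (lam u) (mu (traj f x u (lam u) T) (\<lambda>r. u (T + r))) \<in> signals D"
    by (rule signals_cat[OF na_sig[OF lam u] na_sig[OF mu signals_shift[OF u T]] T])
next
  fix t :: real and u u' N
  assume t: "t \<ge> 0" and u: "u \<in> signals U" "u' \<in> signals U" and N: "negligible N"
    and eq: "\<forall>s\<in>{0..t} - N. u s = u' s"
  have eqm: "\<forall>s\<in>{0..min t T} - N. u s = u' s" using eq by auto
  obtain N1 where N1: "negligible N1" "\<forall>s\<in>{0..min t T} - N1. lam u s = lam u' s"
    using na_neg[OF lam _ u N eqm] t T by auto
  show "\<exists>N'. negligible N' \<and> (\<forall>s\<in>{0..t} - N'.
      cat T (lam u) (mu (traj f x u (lam u) T) (\<lambda>r. u (T + r))) s =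
      cat T (lam u') (mu (traj f x u' (lam u') T) (\<lambda>r. u' (T + r))) s)"
  proof (cases "t \<le> T")
    case True
    then show ?thesis using N1 by (intro exI[of _ N1]) (auto simp: cat_def min_def)
  next
    case False
    then have mn: "min t T = T" by simp
    have y: "traj f x u (lam u) T = traj f x u' (lam u') T"
    proof (rule tc[OF u na_sig[OF lam u(1)] na_sig[OF lam u(2)], where N="N \<union> N1" and T=T])
      show "negligible (N \<union> N1)" using N N1 by auto
      show "\<And>s. s \<in> {0..T} - (N \<union> N1) \<Longrightarrow> u s = u' s \<and> lam u s = lam u' s"
        using eq N1(2) False unfolding mn by auto
    qed simp
    define z where "z = traj f x u (lam u) T"
    have sh: "\<forall>r\<in>{0..t - T} - (+) (- T) ` N. u (T + r) = u' (T + r)"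
    proof
      fix r assume r: "r \<in> {0..t - T} - (+) (- T) ` N"
      have "T + r \<notin> N"
      proof
        assume "T + r \<in> N"
        then have "- T + (T + r) \<in> (+) (- T) ` N" by blast
        then show False using r by simp
      qed
      then show "u (T + r) = u' (T + r)" using eq r T by auto
    qed
    obtain N2 where N2: "negligible N2" "\<forall>r\<in>{0..t - T} - N2. mu z (\<lambda>r. u (T + r)) r = mu z (\<lambda>r. u' (T + r)) r"
      using na_neg[OF mu _ signals_shift[OF u(1) T] signals_shift[OF u(2) T] negligible_translation[OF N] sh] False
      by auto
    show ?thesis
    proof (intro exI conjI)
      show "negligible (N1 \<union> (+) T ` N2)" using N1(1) negligible_translation[OF N2(1)] by auto
      show "\<forall>s\<in>{0..t} - (N1 \<union> (+) T ` N2).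
        cat T (lam u) (mu (traj f x u (lam u) T) (\<lambda>r. u (T + r))) s =
        cat T (lam u') (mu (traj f x u' (lam u') T) (\<lambda>r. u' (T + r))) s"
      proof
        fix s assume s: "s \<in> {0..t} - (N1 \<union> (+) T ` N2)"
        show "cat T (lam u) (mu (traj f x u (lam u) T) (\<lambda>r. u (T + r))) s =
          cat T (lam u') (mu (traj f x u' (lam u') T) (\<lambda>r. u' (T + r))) s"
        proof (cases "s \<le> T")
          case True
          then show ?thesis using N1(2) s unfolding mn by (auto simp: cat_def)
        next
          case F2: False
          have "s - T \<notin> N2"
          proof
            assume "s - T \<in> N2"
            then have "T + (s - T) \<in> (+) T ` N2" by blast
            then show False using s by simp
          qed
          then have "mu z (\<lambda>r. u (T + r)) (s - T) = mu z (\<lambda>r. u' (T + r)) (s - T)"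
            using N2(2) s F2 by auto
          then show ?thesis using F2 y by (simp add: cat_def z_def)
        qed
      qed
    qed
  qed
qed

end

lemma inf_bnd:
  fixes g :: "'a \<Rightarrow> real"
  assumes "A \<noteq> {}" "\<And>i. i \<in> A \<Longrightarrow> \<bar>g i\<bar> \<le> K"
  shows "bdd_below (g ` A)" "\<bar>(INF i\<in>A. g i)\<bar> \<le> K"
proof -
  show b: "bdd_below (g ` A)"
  proof (rule bdd_belowI2[where m="- K"])
    fix i assume "i \<in> A" then show "- K \<le> g i" using assms(2)[of i] by linarith
  qed
  obtain i where i: "i \<in> A" using assms by blast
  have "(INF i\<in>A. g i) \<le> g i" by (rule cINF_lower[OF b i])
  moreover have "- K \<le> (INF i\<in>A. g i)"
  proof (rule cINF_greatest[OF assms(1)])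
    fix i assume "i \<in> A" then show "- K \<le> g i" using assms(2)[of i] by linarith
  qed
  ultimately show "\<bar>(INF i\<in>A. g i)\<bar> \<le> K" using assms(2)[OF i] by (auto simp: abs_le_iff)
qed

lemma sup_bnd:
  fixes g :: "'a \<Rightarrow> real"
  assumes "A \<noteq> {}" "\<And>i. i \<in> A \<Longrightarrow> \<bar>g i\<bar> \<le> K"
  shows "bdd_above (g ` A)" "\<bar>(SUP i\<in>A. g i)\<bar> \<le> K"
proof -
  show b: "bdd_above (g ` A)"
  proof (rule bdd_aboveI2[where M="K"])
    fix i assume "i \<in> A" then show "g i \<le> K" using assms(2)[of i] by linarith
  qed
  obtain i where i: "i \<in> A" using assms by blast
  have "g i \<le> (SUP i\<in>A. g i)" by (rule cSUP_upper[OF i b])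
  moreover have "(SUP i\<in>A. g i) \<le> K"
  proof (rule cSUP_least[OF assms(1)])
    fix i assume "i \<in> A" then show "g i \<le> K" using assms(2)[of i] by linarith
  qed
  ultimately show "\<bar>(SUP i\<in>A. g i)\<bar> \<le> K" using assms(2)[OF i] by (auto simp: abs_le_iff)
qed

theorem mainTheorem3:
  fixes f :: "'n::euclidean_space \<Rightarrow> 'u::euclidean_space \<Rightarrow> 'd::euclidean_space \<Rightarrow> 'n"
    and U :: "'u set" and D :: "'d set"
    and l c :: "'n \<Rightarrow> real" and \<gamma> :: real
  assumes U: "compact U" "convex U" "U \<noteq> {}"
    and D: "compact D" "convex D" "D \<noteq> {}"
    and f_uc: "uniformly_continuous_on (UNIV \<times> U \<times> D) (\<lambda>(x, u, d). f x u d)"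
    and f_bdd: "bounded ((\<lambda>(x, u, d). f x u d) ` (UNIV \<times> U \<times> D))"
    and f_lip: "\<exists>L. \<forall>x y u d. u \<in> U \<longrightarrow> d \<in> D \<longrightarrow> norm (f x u d - f y u d) \<le> L * dist x y"
    and l_bdd: "bounded (range l)" and l_lip: "\<exists>L. L-lipschitz_on UNIV l"
    and c_bdd: "bounded (range c)" and c_lip: "\<exists>L. L-lipschitz_on UNIV c"
    and \<gamma>: "\<gamma> > 0"
  shows "\<forall>x T. T > 0 \<longrightarrow>
    V_gamma f U D l c \<gamma> x =
      (SUP lam\<in>nonanticipative_strategies U D. INF u\<in>signals U.
         min (INF t\<in>{0..T}. ra_payoff \<gamma> l c (traj f x u (lam u)) t)
             (max (exp (- \<gamma> * T) * V_gamma f U D l c \<gamma> (traj f x u (lam u) T))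
                  (SUP t\<in>{0..T}. exp (- \<gamma> * t) * c (traj f x u (lam u) t))))"
proof (intro allI impI)
  fix x :: 'n and T :: real assume T: "T > 0"
  have T0: "T \<ge> 0" using T by simp
  obtain Kl where Kl: "\<And>y. \<bar>l y\<bar> \<le> Kl" using l_bdd unfolding bounded_iff by auto
  obtain Kc where Kc: "\<And>y. \<bar>c y\<bar> \<le> Kc" using c_bdd unfolding bounded_iff by auto
  define K where "K = max Kl Kc"
  have lK: "\<And>y. \<bar>l y\<bar> \<le> K" using Kl unfolding K_def by (meson max.coboundedI1)
  have cK: "\<And>y. \<bar>c y\<bar> \<le> K" using Kc unfolding K_def by (meson max.coboundedI2)
  obtain M where M0: "\<forall>z\<in>(\<lambda>(x, u, d). f x u d) ` (UNIV \<times> U \<times> D). norm z \<le> M"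
    using f_bdd unfolding bounded_iff by blast
  have M: "\<And>z. z \<in> (\<lambda>(x, u, d). f x u d) ` (UNIV \<times> U \<times> D) \<Longrightarrow> norm z \<le> M" using M0 by blast
  have fbndA: "\<forall>x u d. u \<in> U \<and> d \<in> D \<longrightarrow> norm (f x u d) \<le> M"
  proof (intro allI impI)
    fix x u d assume "u \<in> U \<and> d \<in> D"
    then have "f x u d \<in> (\<lambda>(x, u, d). f x u d) ` (UNIV \<times> U \<times> D)"
      by (intro image_eqI[where x="(x, u, d)"]) auto
    then show "norm (f x u d) \<le> M" by (rule M)
  qed
  obtain L0 where L0: "\<forall>x y u d. u \<in> U \<longrightarrow> d \<in> D \<longrightarrow> norm (f x u d - f y u d) \<le> L0 * dist x y"
    using f_lip by blast
  define L where "L = max L0 0"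
  have L: "L \<ge> 0" unfolding L_def by simp
  have flipA: "\<forall>x y u d. u \<in> U \<and> d \<in> D \<longrightarrow> norm (f x u d - f y u d) \<le> L * norm (x - y)"
  proof (intro allI impI)
    fix x y u d assume "u \<in> U \<and> d \<in> D"
    then have "norm (f x u d - f y u d) \<le> L0 * dist x y" using L0 by blast
    also have "\<dots> \<le> L * dist x y" unfolding L_def by (intro mult_right_mono) auto
    finally show "norm (f x u d - f y u d) \<le> L * norm (x - y)" by (simp add: dist_norm)
  qed
  have fc: "continuous_on (UNIV \<times> U \<times> D) (\<lambda>(x, u, d). f x u d)"
    by (rule uniformly_continuous_imp_continuous[OF f_uc])
  note tc = traj_causal[OF fc fbndA flipA L]
  note tcat1 = traj_cat(1)[OF fc fbndA flipA L]
  note tcat2 = traj_cat(2)[OF fc fbndA flipA L]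
  note glue = glue_strat[OF fc fbndA flipA L]

  define \<Lambda> where "\<Lambda> = nonanticipative_strategies U D"
  define SU where "SU = signals U"
  have \<Lambda>ne: "\<Lambda> \<noteq> {}" unfolding \<Lambda>_def by (rule strategies_ne[OF D(3)])
  have SUne: "SU \<noteq> {}" unfolding SU_def by (rule signals_ne[OF U(3)])
  define J where "J = (\<lambda>z lam u. INF t\<in>{0..}. ra_payoff \<gamma> l c (traj f z u (lam u)) t)"
  define Vg where "Vg = V_gamma f U D l c \<gamma>"
  have Vg_eq: "Vg z = (SUP lam\<in>\<Lambda>. INF u\<in>SU. J z lam u)" for z
    unfolding Vg_def V_gamma_def J_def \<Lambda>_def SU_def by simp
  have pb: "\<bar>ra_payoff \<gamma> l c (traj f z u (lam u)) t\<bar> \<le> K" if "t \<ge> 0" for z u lam t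
    by (rule payoff_bnd[OF \<gamma> lK cK that])
  have Jb: "bdd_below ((\<lambda>t. ra_payoff \<gamma> l c (traj f z u (lam u)) t) ` {0..})" "\<bar>J z lam u\<bar> \<le> K" for z lam u
    using inf_bnd[of "{0..}" "\<lambda>t. ra_payoff \<gamma> l c (traj f z u (lam u)) t" K] pb unfolding J_def by auto
  have IJb: "bdd_below (J z lam ` SU)" "\<bar>(INF u\<in>SU. J z lam u)\<bar> \<le> K" for z lam
    using inf_bnd[OF SUne, of "J z lam" K] Jb by auto
  have Vb: "bdd_above ((\<lambda>lam. INF u\<in>SU. J z lam u) ` \<Lambda>)" "\<bar>Vg z\<bar> \<le> K" for z
    using sup_bnd[OF \<Lambda>ne, of "\<lambda>lam. INF u\<in>SU. J z lam u" K] IJb unfolding Vg_eq by auto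

  define A where "A = (\<lambda>lam u. INF t\<in>{0..T}. ra_payoff \<gamma> l c (traj f x u (lam u)) t)"
  define C where "C = (\<lambda>lam u. SUP t\<in>{0..T}. exp (- \<gamma> * t) * c (traj f x u (lam u) t))"
  define R where "R = (\<lambda>lam u. min (A lam u) (max (exp (- \<gamma> * T) * Vg (traj f x u (lam u) T)) (C lam u)))"
  have Ab: "bdd_below ((\<lambda>t. ra_payoff \<gamma> l c (traj f x u (lam u)) t) ` {0..T})" "\<bar>A lam u\<bar> \<le> K" for lam u
    using inf_bnd[of "{0..T}" "\<lambda>t. ra_payoff \<gamma> l c (traj f x u (lam u)) t" K] pb T0 unfolding A_def by auto
  have Cb: "\<bar>C lam u\<bar> \<le> K" for lam u
    unfolding C_def by (rule sup_props(2)[OF \<gamma> cK T0])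
  have EVb: "\<bar>exp (- \<gamma> * T) * Vg z\<bar> \<le> K" for z
    by (rule disc_bnd[OF \<gamma> T0 Vb(2)])
  have Rb: "\<bar>R lam u\<bar> \<le> K" for lam u
    using Ab(2)[of lam u] Cb[of lam u] EVb[of "traj f x u (lam u) T"] unfolding R_def by (auto simp: abs_le_iff)
  have IRb: "bdd_below (R lam ` SU)" "\<bar>(INF u\<in>SU. R lam u)\<bar> \<le> K" for lam
    using inf_bnd[OF SUne, of "R lam" K] Rb by auto
  have SRb: "bdd_above ((\<lambda>lam. INF u\<in>SU. R lam u) ` \<Lambda>)"
    using sup_bnd[OF \<Lambda>ne, of "\<lambda>lam. INF u\<in>SU. R lam u" K] IRb by auto
  have e01: "0 < exp (- \<gamma> * T)" "exp (- \<gamma> * T) \<le> 1" using \<gamma> T0 by auto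

  have part1: "(INF u\<in>SU. J x lam u) \<le> (INF u\<in>SU. R lam u)" if lam: "lam \<in> \<Lambda>" for lam
  proof (rule cINF_greatest[OF SUne])
    fix u assume u: "u \<in> SU"
    have lamS: "lam \<in> nonanticipative_strategies U D" using lam unfolding \<Lambda>_def .
    have uS: "u \<in> signals U" using u unfolding SU_def .
    have luS: "lam u \<in> signals D" by (rule na_sig[OF lamS uS])
    define \<xi> where "\<xi> = traj f x u (lam u)"
    define y where "y = \<xi> T"
    have a1: "(INF u\<in>SU. J x lam u) \<le> A lam u"
    proof -
      have "(INF u\<in>SU. J x lam u) \<le> J x lam u" by (rule cINF_lower[OF IJb(1) u])
      also have "J x lam u \<le> A lam u"
        unfolding J_def A_def by (rule cINF_superset_mono[OF _ Jb(1)]) (use T0 in auto)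
      finally show ?thesis .
    qed
    show "(INF u\<in>SU. J x lam u) \<le> R lam u"
    proof (rule field_le_epsilon)
      fix \<epsilon> :: real assume \<epsilon>: "\<epsilon> > 0"
      define \<mu> where "\<mu> = (\<lambda>v r. lam (cat T u v) (T + r))"
      have \<mu>S: "\<mu> \<in> nonanticipative_strategies U D" unfolding \<mu>_def by (rule shift_strat[OF lamS uS T0])
      have "(INF v\<in>SU. J y \<mu> v) \<le> Vg y"
        unfolding Vg_eq[of y] by (rule cSUP_upper[OF _ Vb(1)]) (use \<mu>S in \<open>simp add: \<Lambda>_def\<close>)
      then have "(INF v\<in>SU. J y \<mu> v) < Vg y + \<epsilon>" using \<epsilon> by linarith
      then obtain v where v: "v \<in> SU" and Jv: "J y \<mu> v < Vg y + \<epsilon>"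
        using cINF_less_iff[OF SUne IJb(1)] by blast
      have vS: "v \<in> signals U" using v unfolding SU_def .
      define \<eta> where "\<eta> = traj f y v (\<mu> v)"
      have "(INF t\<in>{0..}. ra_payoff \<gamma> l c \<eta> t) < Vg y + \<epsilon>" using Jv unfolding J_def \<eta>_def .
      then obtain r where r: "r \<in> {0..}" and Pr: "ra_payoff \<gamma> l c \<eta> r < Vg y + \<epsilon>"
        using cINF_less_iff[of "{0..}", OF _ Jb(1)[of y v \<mu>, folded \<eta>_def]] by auto
      have r0: "r \<ge> 0" using r by simp
      define u' where "u' = cat T u v"
      have u'S: "u' \<in> signals U" unfolding u'_def by (rule signals_cat[OF uS vS T0])
      have u'SU: "u' \<in> SU" using u'S unfolding SU_def .
      define d' where "d' = lam u'"
      have d'S: "d' \<in> signals D" unfolding d'_def by (rule na_sig[OF lamS u'S])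
      have \<mu>vS: "\<mu> v \<in> signals D" by (rule na_sig[OF \<mu>S vS])
      have cu: "\<forall>s\<in>{0..T} - {}. u' s = u s" unfolding u'_def cat_def by auto
      obtain N1 where N1: "negligible N1" "\<forall>s\<in>{0..T} - N1. lam u' s = lam u s"
        using na_neg[OF lamS T0 u'S uS negligible_empty cu] by blast
      have e1: "traj f x u' d' s = \<xi> s" if "s \<in> {0..T}" for s
        unfolding \<xi>_def d'_def
        by (rule tc[OF u'S uS na_sig[OF lamS u'S] luS N1(1), where T=T]) (use N1(2) cu that in auto)
      have yT: "traj f x u d' T = y"
        unfolding y_def \<xi>_def d'_def
        by (rule tc[OF uS uS na_sig[OF lamS u'S] luS N1(1), where T=T]) (use N1(2) in auto)
      have dd: "d' = cat T d' (\<mu> v)"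
        unfolding cat_def \<mu>_def d'_def u'_def by (rule ext) simp
      have e2: "traj f x u' d' (T + r) = \<eta> r" if "r \<ge> 0" for r
      proof -
        have "traj f x u' d' (T + r) = traj f x (cat T u v) (cat T d' (\<mu> v)) (T + r)"
          using dd u'_def by simp
        also have "\<dots> = traj f (traj f x u d' T) v (\<mu> v) r"
          by (rule tcat2[OF uS vS d'S \<mu>vS T0 that])
        finally show ?thesis unfolding yT \<eta>_def .
      qed
      have "J x lam u' \<le> ra_payoff \<gamma> l c (traj f x u' d') (T + r)"
        unfolding J_def d'_def by (rule cINF_lower[OF Jb(1)]) (use r0 T0 in auto)
      also have "\<dots> = max (C lam u) (exp (- \<gamma> * T) * ra_payoff \<gamma> l c \<eta> r)"
        unfolding C_def \<xi>_def[symmetric] by (rule payoff_split[where c=c and l=l and \<xi>'="traj f x u' d'" and \<xi>=\<xi> and \<eta>=\<eta>, OF \<gamma> cK T0 r0 e1 e2])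
      also have "\<dots> \<le> max (exp (- \<gamma> * T) * Vg y) (C lam u) + \<epsilon>"
      proof -
        have "exp (- \<gamma> * T) * ra_payoff \<gamma> l c \<eta> r \<le> exp (- \<gamma> * T) * (Vg y + \<epsilon>)"
          using Pr e01 by (intro mult_left_mono) auto
        also have "\<dots> \<le> exp (- \<gamma> * T) * Vg y + \<epsilon>"
          using e01 \<epsilon> by (simp add: distrib_left mult_left_le_one_le)
        finally have "exp (- \<gamma> * T) * ra_payoff \<gamma> l c \<eta> r \<le> exp (- \<gamma> * T) * Vg y + \<epsilon>" .
        then show ?thesis using \<epsilon> unfolding max_def by auto
      qed
      finally have a2: "(INF u\<in>SU. J x lam u) \<le> max (exp (- \<gamma> * T) * Vg y) (C lam u) + \<epsilon>"
        using cINF_lower[OF IJb(1) u'SU, of x lam] by linarith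
      show "(INF u\<in>SU. J x lam u) \<le> R lam u + \<epsilon>"
        using a1 a2 \<epsilon> unfolding R_def y_def \<xi>_def by linarith
    qed
  qed
  have part2: "(INF u\<in>SU. R lam u) \<le> Vg x" if lam: "lam \<in> \<Lambda>" for lam
  proof (rule field_le_epsilon)
    fix \<epsilon> :: real assume \<epsilon>: "\<epsilon> > 0"
    have lamS: "lam \<in> nonanticipative_strategies U D" using lam unfolding \<Lambda>_def .
    define mu where "mu = (\<lambda>z. SOME \<mu>. \<mu> \<in> \<Lambda> \<and> Vg z - \<epsilon> < (INF v\<in>SU. J z \<mu> v))"
    have mu: "mu z \<in> \<Lambda> \<and> Vg z - \<epsilon> < (INF v\<in>SU. J z (mu z) v)" for z
    proof -
      have "Vg z - \<epsilon> < (SUP lam\<in>\<Lambda>. INF u\<in>SU. J z lam u)" using \<epsilon> unfolding Vg_eq[of z, symmetric] by simp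
      then have "\<exists>\<mu>. \<mu> \<in> \<Lambda> \<and> Vg z - \<epsilon> < (INF v\<in>SU. J z \<mu> v)"
        using less_cSUP_iff[OF \<Lambda>ne Vb(1)] by blast
      then show ?thesis unfolding mu_def by (rule someI_ex)
    qed
    have muS: "mu z \<in> nonanticipative_strategies U D" for z using mu[of z] unfolding \<Lambda>_def by blast
    define lam' where "lam' = (\<lambda>u. cat T (lam u) (mu (traj f x u (lam u) T) (\<lambda>r. u (T + r))))"
    have lam'S: "lam' \<in> nonanticipative_strategies U D"
      unfolding lam'_def by (rule glue[OF lamS T0 muS])
    have "(INF u\<in>SU. J x lam' u) \<le> Vg x"
      unfolding Vg_eq[of x] by (rule cSUP_upper[OF _ Vb(1)]) (use lam'S in \<open>simp add: \<Lambda>_def\<close>)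
    moreover have "(INF u\<in>SU. R lam u) - \<epsilon> \<le> (INF u\<in>SU. J x lam' u)"
    proof (rule cINF_greatest[OF SUne])
      fix u assume u: "u \<in> SU"
      have uS: "u \<in> signals U" using u unfolding SU_def .
      have luS: "lam u \<in> signals D" by (rule na_sig[OF lamS uS])
      define \<xi> where "\<xi> = traj f x u (lam u)"
      define y where "y = \<xi> T"
      define w where "w = (\<lambda>r. u (T + r))"
      define \<mu> where "\<mu> = mu y"
      have wS: "w \<in> signals U" unfolding w_def by (rule signals_shift[OF uS T0])
      have wSU: "w \<in> SU" using wS unfolding SU_def .
      have \<mu>wS: "\<mu> w \<in> signals D" unfolding \<mu>_def by (rule na_sig[OF muS wS])
      have l'u: "lam' u = cat T (lam u) (\<mu> w)" unfolding lam'_def \<mu>_def y_def \<xi>_def w_def ..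
      have uu: "cat T u w = u" unfolding cat_def w_def by (rule ext) simp
      have tr: "traj f x u (lam' u) = traj f x (cat T u w) (cat T (lam u) (\<mu> w))"
        unfolding l'u uu ..
      define \<eta> where "\<eta> = traj f y w (\<mu> w)"
      have e1: "traj f x u (lam' u) s = \<xi> s" if "s \<in> {0..T}" for s
        unfolding tr \<xi>_def by (rule tcat1[OF uS wS luS \<mu>wS T0]) (use that in simp)
      have e2: "traj f x u (lam' u) (T + r) = \<eta> r" if "r \<ge> 0" for r
        unfolding tr \<eta>_def y_def \<xi>_def by (rule tcat2[OF uS wS luS \<mu>wS T0 that])
      have Rle: "(INF u\<in>SU. R lam u) \<le> R lam u" by (rule cINF_lower[OF IRb(1) u])
      have "R lam u - \<epsilon> \<le> J x lam' u"
        unfolding J_def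
      proof (rule cINF_greatest)
        show "{0::real..} \<noteq> {}" by auto
        fix t :: real assume "t \<in> {0..}"
        then have t0: "t \<ge> 0" by simp
        show "R lam u - \<epsilon> \<le> ra_payoff \<gamma> l c (traj f x u (lam' u)) t"
        proof (cases "t \<le> T")
          case True
          have "ra_payoff \<gamma> l c (traj f x u (lam' u)) t = ra_payoff \<gamma> l c \<xi> t"
            by (rule payoff_local[OF _ t0]) (use e1 True in auto)
          moreover have "A lam u \<le> ra_payoff \<gamma> l c \<xi> t"
            unfolding A_def \<xi>_def by (rule cINF_lower[OF Ab(1)]) (use t0 True in auto)
          moreover have "R lam u \<le> A lam u" unfolding R_def by simp
          ultimately show ?thesis using \<epsilon> by linarith
        next
          case False
          define r where "r = t - T"
          have r0: "r \<ge> 0" and tr': "t = T + r" using False unfolding r_def by auto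
          have PS: "ra_payoff \<gamma> l c (traj f x u (lam' u)) t = max (C lam u) (exp (- \<gamma> * T) * ra_payoff \<gamma> l c \<eta> r)"
            unfolding tr' C_def \<xi>_def[symmetric]
            by (rule payoff_split[where c=c and l=l and \<xi>'="traj f x u (lam' u)" and \<xi>=\<xi> and \<eta>=\<eta>, OF \<gamma> cK T0 r0 e1 e2])
          have VP: "Vg y - \<epsilon> < ra_payoff \<gamma> l c \<eta> r"
          proof -
            have "Vg y - \<epsilon> < (INF v\<in>SU. J y \<mu> v)" using mu[of y] unfolding \<mu>_def by blast
            also have "\<dots> \<le> J y \<mu> w" by (rule cINF_lower[OF IJb(1) wSU])
            also have "\<dots> \<le> ra_payoff \<gamma> l c \<eta> r"
              unfolding J_def \<eta>_def by (rule cINF_lower[OF Jb(1)]) (use r0 in simp)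
            finally show ?thesis .
          qed
          have m1: "exp (- \<gamma> * T) * (Vg y - \<epsilon>) \<le> exp (- \<gamma> * T) * ra_payoff \<gamma> l c \<eta> r"
            using VP e01 by (intro mult_left_mono) auto
          have m2: "exp (- \<gamma> * T) * Vg y - \<epsilon> \<le> exp (- \<gamma> * T) * (Vg y - \<epsilon>)"
            using e01 \<epsilon> by (simp add: right_diff_distrib mult_left_le_one_le)
          have m3: "exp (- \<gamma> * T) * Vg y - \<epsilon> \<le> exp (- \<gamma> * T) * ra_payoff \<gamma> l c \<eta> r"
            using m1 m2 by linarith
          have c1: "C lam u \<le> max (C lam u) (exp (- \<gamma> * T) * ra_payoff \<gamma> l c \<eta> r)" by (rule max.cobounded1)
          have c2: "exp (- \<gamma> * T) * ra_payoff \<gamma> l c \<eta> r \<le> max (C lam u) (exp (- \<gamma> * T) * ra_payoff \<gamma> l c \<eta> r)" by (rule max.cobounded2)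
          have "max (exp (- \<gamma> * T) * Vg y) (C lam u) \<le> max (C lam u) (exp (- \<gamma> * T) * ra_payoff \<gamma> l c \<eta> r) + \<epsilon>"
            by (rule max.boundedI) (use m3 c1 c2 \<epsilon> in linarith)+
          then have "max (exp (- \<gamma> * T) * Vg y) (C lam u) - \<epsilon> \<le> ra_payoff \<gamma> l c (traj f x u (lam' u)) t"
            unfolding PS by linarith
          moreover have "R lam u \<le> max (exp (- \<gamma> * T) * Vg y) (C lam u)"
            unfolding R_def y_def \<xi>_def by simp
          ultimately show ?thesis by linarith
        qed
      qed
      then show "(INF u\<in>SU. R lam u) - \<epsilon> \<le> J x lam' u" using Rle by linarith
    qed
    ultimately show "(INF u\<in>SU. R lam u) \<le> Vg x + \<epsilon>" by linarith
  qed
  have main: "Vg x = (SUP lam\<in>\<Lambda>. INF u\<in>SU. R lam u)"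
  proof (rule antisym)
    show "Vg x \<le> (SUP lam\<in>\<Lambda>. INF u\<in>SU. R lam u)"
      unfolding Vg_eq[of x] by (rule cSUP_mono[OF \<Lambda>ne SRb]) (use part1 in blast)
    show "(SUP lam\<in>\<Lambda>. INF u\<in>SU. R lam u) \<le> Vg x"
      by (rule cSUP_least[OF \<Lambda>ne part2])
  qed
  then show "V_gamma f U D l c \<gamma> x =
      (SUP lam\<in>nonanticipative_strategies U D. INF u\<in>signals U.
         min (INF t\<in>{0..T}. ra_payoff \<gamma> l c (traj f x u (lam u)) t)
             (max (exp (- \<gamma> * T) * V_gamma f U D l c \<gamma> (traj f x u (lam u) T))
                  (SUP t\<in>{0..T}. exp (- \<gamma> * t) * c (traj f x u (lam u) t))))"
    unfolding Vg_def R_def A_def C_def \<Lambda>_def SU_def .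
qed

end
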